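(* Let $\pi\in S_n$ and $e=\Theta(\pi)$. Then: (a) $\pi$ avoids the vincular pattern $3\underline{214}$ if and only if $e$ avoids the consecutive pattern $120$; (b) $\pi$ avoids the vincular pattern $2\underline{413}$ if and only if $e$ avoids the consecutive pattern $021$. In particular $|\mathbf{I}_n(120)|=|S_n(3\underline{214})|$ and $|\mathbf{I}_n(021)|=|S_n(2\underline{413})|$ for all $n$.
   Context: $S_n$ is the set of permutations of $[n]$, and $\mathbf{I}_n$ the set of integer sequences $e_1\dots e_n$ with $0\le e_i<i$. $\Theta:S_n\to\mathbf{I}_n$ is the bijection $\pi\mapsto e$ with $e_i=|\{j: j<i,\ \pi_j>\pi_i\}|$. $\pi$ contains $3\underline{214}$ if there exist $j<i$ with $\pi_{i+1}<\pi_i<\pi_j<\pi_{i+2}$; $\pi$ contains $2\underline{413}$ if there exist $j<i$ with $\pi_{i+1}<\pi_j<\pi_{i+2}<\pi_i$; avoiding means not containing, and $S_n(\sigma)$ is the set of permutations avoiding $\sigma$. $e$ avoids the consecutive pattern $120$ if there is no $i$ with $e_{i+2}<e_i<e_{i+1}$, and avoids $021$ if there is no $i$ with $e_i<e_{i+2}<e_{i+1}$; $\mathbf{I}_n(p)$ is the set of $e\in\mathbf{I}_n$ avoiding $p$. *)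

theory Defs
  imports "HOL-Combinatorics.Permutations"
begin

text \<open>Sequences and permutations are 1-indexed functions on nat; positions are 1..n.\<close>

definition Sn :: "nat \<Rightarrow> (nat \<Rightarrow> nat) set" where
  "Sn n = {\<pi>. \<pi> permutes {1..n}}"

definition In :: "nat \<Rightarrow> (nat \<Rightarrow> nat) set" where
  "In n = {e. (\<forall>i\<in>{1..n}. e i < i) \<and> (\<forall>i. i \<notin> {1..n} \<longrightarrow> e i = 0)}"

definition Theta :: "nat \<Rightarrow> (nat \<Rightarrow> nat) \<Rightarrow> (nat \<Rightarrow> nat)" where
  "Theta n \<pi> = (\<lambda>i. if i \<in> {1..n} then card {j. 1 \<le> j \<and> j < i \<and> \<pi> j > \<pi> i} else 0)"

definition contains_3_214 :: "nat \<Rightarrow> (nat \<Rightarrow> nat) \<Rightarrow> bool" where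
  "contains_3_214 n \<pi> \<longleftrightarrow> (\<exists>i j. 1 \<le> j \<and> j < i \<and> i + 2 \<le> n \<and>
      \<pi> (i+1) < \<pi> i \<and> \<pi> i < \<pi> j \<and> \<pi> j < \<pi> (i+2))"

definition contains_2_413 :: "nat \<Rightarrow> (nat \<Rightarrow> nat) \<Rightarrow> bool" where
  "contains_2_413 n \<pi> \<longleftrightarrow> (\<exists>i j. 1 \<le> j \<and> j < i \<and> i + 2 \<le> n \<and>
      \<pi> (i+1) < \<pi> j \<and> \<pi> j < \<pi> (i+2) \<and> \<pi> (i+2) < \<pi> i)"

definition avoids_120 :: "nat \<Rightarrow> (nat \<Rightarrow> nat) \<Rightarrow> bool" where
  "avoids_120 n e \<longleftrightarrow> \<not> (\<exists>i. 1 \<le> i \<and> i + 2 \<le> n \<and> e (i+2) < e i \<and> e i < e (i+1))"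

definition avoids_021 :: "nat \<Rightarrow> (nat \<Rightarrow> nat) \<Rightarrow> bool" where
  "avoids_021 n e \<longleftrightarrow> \<not> (\<exists>i. 1 \<le> i \<and> i + 2 \<le> n \<and> e i < e (i+2) \<and> e (i+2) < e (i+1))"

end

theory Submission
  imports Defs
begin

definition cnt :: "(nat \<Rightarrow> nat) \<Rightarrow> nat \<Rightarrow> nat \<Rightarrow> nat" where
  "cnt \<pi> k x = card {j. 1 \<le> j \<and> j < k \<and> x < \<pi> j}"

lemma Theta_cnt: "i \<in> {1..n} \<Longrightarrow> Theta n \<pi> i = cnt \<pi> i (\<pi> i)"
  unfolding Theta_def cnt_def by simp

lemma cnt_Suc: assumes "1 \<le> k"
  shows "cnt \<pi> (Suc k) x = cnt \<pi> k x + (if x < \<pi> k then 1 else 0)"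
proof -
  have fin: "finite {j. 1 \<le> j \<and> j < k \<and> x < \<pi> j}" by (rule finite_subset[of _ "{..<k}"]) auto
  show ?thesis
  proof (cases "x < \<pi> k")
    case True
    have "{j. 1 \<le> j \<and> j < Suc k \<and> x < \<pi> j} = insert k {j. 1 \<le> j \<and> j < k \<and> x < \<pi> j}"
      using True assms by auto
    then show ?thesis using fin True unfolding cnt_def by simp
  next
    case False
    have "{j. 1 \<le> j \<and> j < Suc k \<and> x < \<pi> j} = {j. 1 \<le> j \<and> j < k \<and> x < \<pi> j}"
      using False less_Suc_eq by auto
    then show ?thesis using False unfolding cnt_def by simp
  qed
qed

lemma cnt_mono: "x \<le> y \<Longrightarrow> cnt \<pi> k y \<le> cnt \<pi> k x"
  unfolding cnt_def
  by (rule card_mono, rule finite_subset[of _ "{..<k}"]) auto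

lemma cnt_strict: assumes "1 \<le> j" "j < k" "x < \<pi> j" "\<pi> j \<le> y"
  shows "cnt \<pi> k y < cnt \<pi> k x"
  unfolding cnt_def
proof (rule psubset_card_mono)
  show "finite {j. 1 \<le> j \<and> j < k \<and> x < \<pi> j}" by (rule finite_subset[of _ "{..<k}"]) auto
  have "{j. 1 \<le> j \<and> j < k \<and> y < \<pi> j} \<subseteq> {j. 1 \<le> j \<and> j < k \<and> x < \<pi> j}"
    using assms by auto
  moreover have "j \<in> {j. 1 \<le> j \<and> j < k \<and> x < \<pi> j}" "j \<notin> {j. 1 \<le> j \<and> j < k \<and> y < \<pi> j}"
    using assms by auto
  ultimately show "{j. 1 \<le> j \<and> j < k \<and> y < \<pi> j} \<subset> {j. 1 \<le> j \<and> j < k \<and> x < \<pi> j}"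
    by blast
qed

lemma cnt_strict_conv: assumes "cnt \<pi> k y < cnt \<pi> k x"
  shows "\<exists>j. 1 \<le> j \<and> j < k \<and> x < \<pi> j \<and> \<pi> j \<le> y"
proof (rule ccontr)
  assume "\<not> ?thesis"
  then have "{j. 1 \<le> j \<and> j < k \<and> x < \<pi> j} \<subseteq> {j. 1 \<le> j \<and> j < k \<and> y < \<pi> j}"
    by auto
  then have "cnt \<pi> k x \<le> cnt \<pi> k y" unfolding cnt_def
    by (rule card_mono[rotated]) (rule finite_subset[of _ "{..<k}"], auto)
  with assms show False by simp
qed

lemma local_a:
  assumes inj: "inj \<pi>" and i: "1 \<le> i"
  shows "(cnt \<pi> (i+2) (\<pi> (i+2)) < cnt \<pi> i (\<pi> i) \<and> cnt \<pi> i (\<pi> i) < cnt \<pi> (i+1) (\<pi> (i+1)))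
     \<longleftrightarrow> (\<exists>j. 1 \<le> j \<and> j < i \<and> \<pi> (i+1) < \<pi> i \<and> \<pi> i < \<pi> j \<and> \<pi> j < \<pi> (i+2))"
    (is "?L \<longleftrightarrow> ?R")
proof -
  define a b d where "a = \<pi> i" and "b = \<pi> (i+1)" and "d = \<pi> (i+2)"
  have ab: "a \<noteq> b" "a \<noteq> d" "b \<noteq> d" unfolding a_def b_def d_def by (simp_all add: inj_eq[OF inj])
  have e1: "cnt \<pi> (i+1) b = cnt \<pi> i b + (if b < a then 1 else 0)"
    using cnt_Suc[OF i] a_def by simp
  have e2: "cnt \<pi> (i+2) d = cnt \<pi> i d + (if d < a then 1 else 0) + (if d < b then 1 else 0)"
    using cnt_Suc[OF i, of \<pi> d] cnt_Suc[of "i+1" \<pi> d] a_def b_def i by simp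
  show ?thesis
  proof
    assume L: ?L
    have "b < a"
    proof (rule ccontr)
      assume "\<not> b < a" then have "a < b" using ab by simp
      then show False using L e1 cnt_mono[of a b \<pi> i] a_def b_def by simp
    qed
    have "a < d"
    proof (rule ccontr)
      assume "\<not> a < d" then have "d < a" using ab by simp
      then show False using L e2 cnt_mono[of d a \<pi> i] a_def d_def by simp
    qed
    then have "cnt \<pi> i d < cnt \<pi> i a" using L e2 \<open>b < a\<close> a_def d_def by simp
    then obtain j where j: "1 \<le> j" "j < i" "a < \<pi> j" "\<pi> j \<le> d" using cnt_strict_conv by blast
    have "\<pi> j \<noteq> d" using j unfolding d_def by (simp add: inj_eq[OF inj])
    then show ?R using j \<open>b < a\<close> unfolding a_def b_def d_def
      by (intro exI[of _ j]) auto
  next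
    assume ?R
    then obtain j where j: "1 \<le> j" "j < i" "b < a" "a < \<pi> j" "\<pi> j < d"
      unfolding a_def b_def d_def by blast
    have "cnt \<pi> i d < cnt \<pi> i a" using cnt_strict[of j i a \<pi> d] j by simp
    moreover have "cnt \<pi> i a \<le> cnt \<pi> i b" using cnt_mono[of b a] j by simp
    ultimately show ?L using e1 e2 j unfolding a_def b_def d_def by simp
  qed
qed

lemma local_b:
  assumes inj: "inj \<pi>" and i: "1 \<le> i"
  shows "(cnt \<pi> i (\<pi> i) < cnt \<pi> (i+2) (\<pi> (i+2)) \<and> cnt \<pi> (i+2) (\<pi> (i+2)) < cnt \<pi> (i+1) (\<pi> (i+1)))
     \<longleftrightarrow> (\<exists>j. 1 \<le> j \<and> j < i \<and> \<pi> (i+1) < \<pi> j \<and> \<pi> j < \<pi> (i+2) \<and> \<pi> (i+2) < \<pi> i)"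
    (is "?L \<longleftrightarrow> ?R")
proof -
  define a b d where "a = \<pi> i" and "b = \<pi> (i+1)" and "d = \<pi> (i+2)"
  have ab: "a \<noteq> b" "a \<noteq> d" "b \<noteq> d" unfolding a_def b_def d_def by (simp_all add: inj_eq[OF inj])
  have e1: "cnt \<pi> (i+1) b = cnt \<pi> i b + (if b < a then 1 else 0)"
    using cnt_Suc[OF i] a_def by simp
  have e2: "cnt \<pi> (i+2) d = cnt \<pi> i d + (if d < a then 1 else 0) + (if d < b then 1 else 0)"
    using cnt_Suc[OF i, of \<pi> d] cnt_Suc[of "i+1" \<pi> d] a_def b_def i by simp
  show ?thesis
  proof
    assume L: ?L
    have "b < a"
    proof (rule ccontr)
      assume "\<not> b < a" then have "a < b" using ab by simp
      then show False using L e1 e2 cnt_mono[of a b \<pi> i] cnt_mono[of a d \<pi> i] cnt_mono[of d a \<pi> i]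
          a_def b_def d_def by (auto split: if_splits)
    qed
    have "b < d"
    proof (rule ccontr)
      assume "\<not> b < d" then have "d < b" using ab by simp
      then show False using L e1 e2 \<open>b < a\<close> cnt_mono[of d b \<pi> i] a_def b_def d_def by simp
    qed
    have "d < a"
    proof (rule ccontr)
      assume "\<not> d < a" then have "a < d" using ab by simp
      then show False using L e2 \<open>b < d\<close> cnt_mono[of a d \<pi> i] a_def b_def d_def by simp
    qed
    then have "cnt \<pi> i d < cnt \<pi> i b" using L e1 e2 \<open>b < a\<close> \<open>b < d\<close> a_def b_def d_def by simp
    then obtain j where j: "1 \<le> j" "j < i" "b < \<pi> j" "\<pi> j \<le> d" using cnt_strict_conv by blast
    have "\<pi> j \<noteq> d" using j unfolding d_def by (simp add: inj_eq[OF inj])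
    then show ?R using j \<open>d < a\<close> unfolding a_def b_def d_def
      by (intro exI[of _ j]) auto
  next
    assume ?R
    then obtain j where j: "1 \<le> j" "j < i" "b < \<pi> j" "\<pi> j < d" "d < a"
      unfolding a_def b_def d_def by blast
    have "cnt \<pi> i d < cnt \<pi> i b" using cnt_strict[of j i b \<pi> d] j by simp
    moreover have "cnt \<pi> i a \<le> cnt \<pi> i d" using cnt_mono[of d a] j by simp
    ultimately show ?L using e1 e2 j unfolding a_def b_def d_def by simp
  qed
qed

lemma part_a: assumes "\<pi> \<in> Sn n"
  shows "\<not> contains_3_214 n \<pi> \<longleftrightarrow> avoids_120 n (Theta n \<pi>)"
proof -
  have inj: "inj \<pi>" using assms unfolding Sn_def by (auto intro: permutes_inj)
  have "(\<exists>i. 1 \<le> i \<and> i + 2 \<le> n \<and> Theta n \<pi> (i+2) < Theta n \<pi> i \<and> Theta n \<pi> i < Theta n \<pi> (i+1))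
     \<longleftrightarrow> contains_3_214 n \<pi>"
    unfolding contains_3_214_def
  proof (intro iffI; elim exE conjE)
    fix i assume i: "1 \<le> i" "i + 2 \<le> n" and h: "Theta n \<pi> (i+2) < Theta n \<pi> i" "Theta n \<pi> i < Theta n \<pi> (i+1)"
    then show "\<exists>i j. 1 \<le> j \<and> j < i \<and> i + 2 \<le> n \<and> \<pi> (i + 1) < \<pi> i \<and> \<pi> i < \<pi> j \<and> \<pi> j < \<pi> (i + 2)"
      using local_a[OF inj i(1)] Theta_cnt[of i n] Theta_cnt[of "i+1" n] Theta_cnt[of "i+2" n] by auto
  next
    fix i j assume h: "1 \<le> j" "j < i" "i + 2 \<le> n" "\<pi> (i + 1) < \<pi> i" "\<pi> i < \<pi> j" "\<pi> j < \<pi> (i + 2)"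
    then have i: "1 \<le> i" by simp
    show "\<exists>i. 1 \<le> i \<and> i + 2 \<le> n \<and> Theta n \<pi> (i+2) < Theta n \<pi> i \<and> Theta n \<pi> i < Theta n \<pi> (i+1)"
      using h local_a[OF inj i] Theta_cnt[of i n] Theta_cnt[of "i+1" n] Theta_cnt[of "i+2" n]
      by (intro exI[of _ i]) auto
  qed
  then show ?thesis unfolding avoids_120_def by blast
qed

lemma part_b: assumes "\<pi> \<in> Sn n"
  shows "\<not> contains_2_413 n \<pi> \<longleftrightarrow> avoids_021 n (Theta n \<pi>)"
proof -
  have inj: "inj \<pi>" using assms unfolding Sn_def by (auto intro: permutes_inj)
  have "(\<exists>i. 1 \<le> i \<and> i + 2 \<le> n \<and> Theta n \<pi> i < Theta n \<pi> (i+2) \<and> Theta n \<pi> (i+2) < Theta n \<pi> (i+1))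
     \<longleftrightarrow> contains_2_413 n \<pi>"
    unfolding contains_2_413_def
  proof (intro iffI; elim exE conjE)
    fix i assume i: "1 \<le> i" "i + 2 \<le> n" and h: "Theta n \<pi> i < Theta n \<pi> (i+2)" "Theta n \<pi> (i+2) < Theta n \<pi> (i+1)"
    then show "\<exists>i j. 1 \<le> j \<and> j < i \<and> i + 2 \<le> n \<and> \<pi> (i + 1) < \<pi> j \<and> \<pi> j < \<pi> (i + 2) \<and> \<pi> (i + 2) < \<pi> i"
      using local_b[OF inj i(1)] Theta_cnt[of i n] Theta_cnt[of "i+1" n] Theta_cnt[of "i+2" n] by auto
  next
    fix i j assume h: "1 \<le> j" "j < i" "i + 2 \<le> n" "\<pi> (i + 1) < \<pi> j" "\<pi> j < \<pi> (i + 2)" "\<pi> (i + 2) < \<pi> i"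
    then have i: "1 \<le> i" by simp
    show "\<exists>i. 1 \<le> i \<and> i + 2 \<le> n \<and> Theta n \<pi> i < Theta n \<pi> (i+2) \<and> Theta n \<pi> (i+2) < Theta n \<pi> (i+1)"
      using h local_b[OF inj i] Theta_cnt[of i n] Theta_cnt[of "i+1" n] Theta_cnt[of "i+2" n]
      by (intro exI[of _ i]) auto
  qed
  then show ?thesis unfolding avoids_021_def by blast
qed


lemma Sn_inj: "\<pi> \<in> Sn n \<Longrightarrow> inj \<pi>"
  unfolding Sn_def by (auto intro: permutes_inj)

lemma Theta_agree_step:
  assumes p: "\<pi> \<in> Sn n" and s: "\<sigma> \<in> Sn n" and T: "Theta n \<pi> = Theta n \<sigma>"
    and i: "1 \<le> i" "i \<le> n"
    and IH: "\<And>j k. j \<in> {1..<i} \<Longrightarrow> k \<in> {1..<i} \<Longrightarrow> (\<pi> j < \<pi> k \<longleftrightarrow> \<sigma> j < \<sigma> k)"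
  shows "{j. 1 \<le> j \<and> j < i \<and> \<pi> i < \<pi> j} = {j. 1 \<le> j \<and> j < i \<and> \<sigma> i < \<sigma> j}"
proof -
  have ip: "inj \<pi>" and isg: "inj \<sigma>" using p s by (auto intro: Sn_inj)
  define A where "A = {j. 1 \<le> j \<and> j < i \<and> \<pi> i < \<pi> j}"
  define B where "B = {j. 1 \<le> j \<and> j < i \<and> \<sigma> i < \<sigma> j}"
  have finA: "finite A" unfolding A_def by (rule finite_subset[of _ "{..<i}"]) auto
  have finB: "finite B" unfolding B_def by (rule finite_subset[of _ "{..<i}"]) auto
  have cAB: "card A = card B"
    using fun_cong[OF T, of i] i unfolding Theta_def A_def B_def by simp
  have "B \<subseteq> A" if j: "j \<in> A" "j \<notin> B" for j
  proof
    fix k assume k: "k \<in> B"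
    have "\<sigma> j \<noteq> \<sigma> i" using j unfolding A_def by (auto simp: inj_eq[OF isg])
    then have "\<sigma> j < \<sigma> i" using j unfolding A_def B_def by auto
    then have "\<sigma> j < \<sigma> k" using k unfolding B_def by auto
    then have "\<pi> j < \<pi> k" using IH[of j k] j k unfolding A_def B_def by auto
    then show "k \<in> A" using j k unfolding A_def B_def by auto
  qed
  moreover have "A \<subseteq> B" if j: "j \<in> B" "j \<notin> A" for j
  proof
    fix k assume k: "k \<in> A"
    have "\<pi> j \<noteq> \<pi> i" using j unfolding B_def by (auto simp: inj_eq[OF ip])
    then have "\<pi> j < \<pi> i" using j unfolding A_def B_def by auto
    then have "\<pi> j < \<pi> k" using k unfolding A_def by auto
    then have "\<sigma> j < \<sigma> k" using IH[of j k] j k unfolding A_def B_def by auto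
    then show "k \<in> B" using j k unfolding A_def B_def by auto
  qed
  ultimately have "A = B"
  proof -
    assume h1: "\<And>j. j \<in> A \<Longrightarrow> j \<notin> B \<Longrightarrow> B \<subseteq> A" and h2: "\<And>j. j \<in> B \<Longrightarrow> j \<notin> A \<Longrightarrow> A \<subseteq> B"
    show "A = B"
    proof (rule ccontr)
      assume "A \<noteq> B"
      then obtain j where "(j \<in> A \<and> j \<notin> B) \<or> (j \<in> B \<and> j \<notin> A)" by blast
      then show False
      proof
        assume jj: "j \<in> A \<and> j \<notin> B"
        then have "B \<subset> A" using h1 by blast
        from psubset_card_mono[OF finA this] cAB show False by simp
      next
        assume jj: "j \<in> B \<and> j \<notin> A"
        then have "A \<subset> B" using h2 by blast
        from psubset_card_mono[OF finB this] cAB show False by simp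
      qed
    qed
  qed
  then show ?thesis unfolding A_def B_def .
qed

lemma Theta_agree:
  assumes p: "\<pi> \<in> Sn n" and s: "\<sigma> \<in> Sn n" and T: "Theta n \<pi> = Theta n \<sigma>"
  shows "m \<le> n \<Longrightarrow> \<forall>j\<in>{1..<m+1}. \<forall>k\<in>{1..<m+1}. (\<pi> j < \<pi> k \<longleftrightarrow> \<sigma> j < \<sigma> k)"
proof (induction m)
  case 0
  then show ?case by auto
next
  case (Suc m)
  have ip: "inj \<pi>" and isg: "inj \<sigma>" using p s by (auto intro: Sn_inj)
  define i where "i = Suc m"
  have IH0: "\<forall>j\<in>{1..<m+1}. \<forall>k\<in>{1..<m+1}. (\<pi> j < \<pi> k \<longleftrightarrow> \<sigma> j < \<sigma> k)"
    using Suc.IH Suc.prems by simp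
  have IH: "\<And>j k. j \<in> {1..<i} \<Longrightarrow> k \<in> {1..<i} \<Longrightarrow> (\<pi> j < \<pi> k \<longleftrightarrow> \<sigma> j < \<sigma> k)"
    using IH0 unfolding i_def by simp
  have AB: "{j. 1 \<le> j \<and> j < i \<and> \<pi> i < \<pi> j} = {j. 1 \<le> j \<and> j < i \<and> \<sigma> i < \<sigma> j}"
  proof (rule Theta_agree_step[OF p s T _ _ IH])
    show "1 \<le> i" unfolding i_def by simp
    show "i \<le> n" unfolding i_def using Suc.prems by simp
  qed
  have c1: "\<pi> i < \<pi> j \<longleftrightarrow> \<sigma> i < \<sigma> j" if "j \<in> {1..<i}" for j
  proof -
    have "j \<in> {j. 1 \<le> j \<and> j < i \<and> \<pi> i < \<pi> j} \<longleftrightarrow> j \<in> {j. 1 \<le> j \<and> j < i \<and> \<sigma> i < \<sigma> j}"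
      by (simp only: AB)
    then show ?thesis using that by simp
  qed
  have c2: "\<pi> j < \<pi> i \<longleftrightarrow> \<sigma> j < \<sigma> i" if "j \<in> {1..<i}" for j
  proof -
    have "\<pi> j \<noteq> \<pi> i" "\<sigma> j \<noteq> \<sigma> i" using that by (auto simp: inj_eq[OF ip] inj_eq[OF isg])
    then show ?thesis using c1[OF that] by auto
  qed
  show ?case
  proof (intro ballI)
    fix j k assume j: "j \<in> {1..<Suc m + 1}" and k: "k \<in> {1..<Suc m + 1}"
    have jr: "j = i \<or> j \<in> {1..<i}" and kr: "k = i \<or> k \<in> {1..<i}"
      using j k unfolding i_def by auto
    show "\<pi> j < \<pi> k \<longleftrightarrow> \<sigma> j < \<sigma> k"
    proof (cases "j = i")
      case True
      show ?thesis
      proof (cases "k = i")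
        case True
        then show ?thesis using \<open>j = i\<close> by simp
      next
        case False
        then have "k \<in> {1..<i}" using kr by simp
        then show ?thesis using c1[of k] \<open>j = i\<close> by simp
      qed
    next
      case False
      then have jj: "j \<in> {1..<i}" using jr by simp
      show ?thesis
      proof (cases "k = i")
        case True
        then show ?thesis using c2[OF jj] by simp
      next
        case False
        then have "k \<in> {1..<i}" using kr by simp
        then show ?thesis using IH[OF jj] by simp
      qed
    qed
  qed
qed

lemma perm_val:
  assumes p: "\<pi> \<in> Sn n" and i: "i \<in> {1..n}"
  shows "\<pi> i = card {j\<in>{1..n}. \<not> \<pi> i < \<pi> j}"
proof -
  have pp: "\<pi> permutes {1..n}" using p unfolding Sn_def by simp
  have ip: "inj \<pi>" using p by (rule Sn_inj)
  have im: "\<pi> ` {1..n} = {1..n}" using permutes_image[OF pp] .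
  have pi: "\<pi> i \<in> {1..n}" using im i by auto
  have "\<pi> ` {j\<in>{1..n}. \<not> \<pi> i < \<pi> j} = {1..\<pi> i}"
  proof
    show "\<pi> ` {j\<in>{1..n}. \<not> \<pi> i < \<pi> j} \<subseteq> {1..\<pi> i}" using im by auto
    show "{1..\<pi> i} \<subseteq> \<pi> ` {j\<in>{1..n}. \<not> \<pi> i < \<pi> j}"
    proof
      fix x assume x: "x \<in> {1..\<pi> i}"
      then have "x \<in> \<pi> ` {1..n}" using im pi by auto
      then obtain j where "j \<in> {1..n}" "x = \<pi> j" by auto
      then show "x \<in> \<pi> ` {j\<in>{1..n}. \<not> \<pi> i < \<pi> j}" using x by auto
    qed
  qed
  then have "card {j\<in>{1..n}. \<not> \<pi> i < \<pi> j} = card {1..\<pi> i}"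
    using card_image[of \<pi>] ip by (metis inj_on_subset subset_UNIV)
  then show ?thesis by simp
qed

lemma Theta_inj: "inj_on (Theta n) (Sn n)"
proof (rule inj_onI)
  fix \<pi> \<sigma> assume p: "\<pi> \<in> Sn n" and s: "\<sigma> \<in> Sn n" and T: "Theta n \<pi> = Theta n \<sigma>"
  have ag: "\<forall>j\<in>{1..<n+1}. \<forall>k\<in>{1..<n+1}. (\<pi> j < \<pi> k \<longleftrightarrow> \<sigma> j < \<sigma> k)"
    using Theta_agree[OF p s T, of n] by simp
  show "\<pi> = \<sigma>"
  proof
    fix i show "\<pi> i = \<sigma> i"
    proof (cases "i \<in> {1..n}")
      case True
      have "{j\<in>{1..n}. \<not> \<pi> i < \<pi> j} = {j\<in>{1..n}. \<not> \<sigma> i < \<sigma> j}"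
        using ag True by auto
      then show ?thesis using perm_val[OF p True] perm_val[OF s True] by simp
    next
      case False
      then show ?thesis using p s unfolding Sn_def by (simp add: permutes_def)
    qed
  qed
qed

lemma Theta_into: "\<pi> \<in> Sn n \<Longrightarrow> Theta n \<pi> \<in> In n"
proof -
  have "card {j. 1 \<le> j \<and> j < i \<and> \<pi> i < \<pi> j} < i" if "i \<in> {1..n}" for i
  proof -
    have "card {j. 1 \<le> j \<and> j < i \<and> \<pi> i < \<pi> j} \<le> card {1..<i}"
      by (rule card_mono) auto
    then show ?thesis using that by auto
  qed
  then show "Theta n \<pi> \<in> In n" unfolding In_def Theta_def by auto
qed

lemma card_In: "card (In n) = fact n"
proof -
  have "bij_betw (\<lambda>e. restrict e {1..n}) (In n) (PiE {1..n} (\<lambda>i. {..<i}))"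
  proof (rule bij_betw_byWitness[where f' = "\<lambda>f i. if i \<in> {1..n} then f i else 0"])
    show "\<forall>a\<in>In n. (\<lambda>i. if i \<in> {1..n} then restrict a {1..n} i else 0) = a"
      unfolding In_def by auto
    show "\<forall>a'\<in>PiE {1..n} (\<lambda>i. {..<i}). restrict (\<lambda>i. if i \<in> {1..n} then a' i else 0) {1..n} = a'"
      by (auto simp: PiE_def extensional_def)
    show "(\<lambda>e. restrict e {1..n}) ` In n \<subseteq> PiE {1..n} (\<lambda>i. {..<i})"
      unfolding In_def by auto
    show "(\<lambda>f i. if i \<in> {1..n} then f i else 0) ` PiE {1..n} (\<lambda>i. {..<i}) \<subseteq> In n"
      unfolding In_def by (auto simp: PiE_def Pi_def)
  qed
  then have "card (In n) = card (PiE {1..n} (\<lambda>i. {..<i}))" by (rule bij_betw_same_card)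
  also have "\<dots> = (\<Prod>i\<in>{1..n}. i)" by (simp add: card_PiE)
  also have "\<dots> = fact n" by (simp add: fact_prod)
  finally show ?thesis .
qed

lemma finite_In: "finite (In n)"
proof (rule ccontr)
  assume "infinite (In n)"
  then have "card (In n) = 0" by (rule card.infinite)
  then show False using card_In[of n] by simp
qed

lemma card_Sn: "card (Sn n) = fact n"
proof -
  have "card {p. p permutes {1..n}} = fact (card {1..n})"
    by (rule card_permutations) simp_all
  then show ?thesis unfolding Sn_def by simp
qed

lemma Theta_bij: "bij_betw (Theta n) (Sn n) (In n)"
proof -
  have sub: "Theta n ` Sn n \<subseteq> In n" using Theta_into by blast
  have "card (Theta n ` Sn n) = card (Sn n)" by (rule card_image[OF Theta_inj])
  also have "\<dots> = card (In n)" by (simp only: card_Sn card_In)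
  finally have c: "card (Theta n ` Sn n) = card (In n)" .
  have "Theta n ` Sn n = In n" by (rule card_subset_eq[OF finite_In sub c])
  then show ?thesis using Theta_inj unfolding bij_betw_def by blast
qed

lemma card_transfer:
  assumes "\<And>\<pi>. \<pi> \<in> Sn n \<Longrightarrow> Q \<pi> \<longleftrightarrow> P (Theta n \<pi>)"
  shows "card {e\<in>In n. P e} = card {\<pi>\<in>Sn n. Q \<pi>}"
proof -
  have im: "Theta n ` Sn n = In n" using Theta_bij[of n] unfolding bij_betw_def by simp
  have "{e\<in>In n. P e} = Theta n ` {\<pi>\<in>Sn n. Q \<pi>}"
  proof
    show "{e\<in>In n. P e} \<subseteq> Theta n ` {\<pi>\<in>Sn n. Q \<pi>}"
    proof
      fix e assume e: "e \<in> {e\<in>In n. P e}"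
      then obtain \<pi> where "\<pi> \<in> Sn n" "e = Theta n \<pi>" using im by auto
      moreover have "Q \<pi>" using e assms[OF \<open>\<pi> \<in> Sn n\<close>] \<open>e = Theta n \<pi>\<close> by simp
      ultimately show "e \<in> Theta n ` {\<pi>\<in>Sn n. Q \<pi>}" by blast
    qed
    show "Theta n ` {\<pi>\<in>Sn n. Q \<pi>} \<subseteq> {e\<in>In n. P e}"
    proof
      fix e assume "e \<in> Theta n ` {\<pi>\<in>Sn n. Q \<pi>}"
      then obtain \<pi> where p: "\<pi> \<in> Sn n" "Q \<pi>" "e = Theta n \<pi>" by blast
      then have "P e" using assms[OF p(1)] by simp
      moreover have "e \<in> In n" using p Theta_into by simp
      ultimately show "e \<in> {e\<in>In n. P e}" by simp
    qed
  qed
  moreover have "inj_on (Theta n) {\<pi>\<in>Sn n. Q \<pi>}"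
    using Theta_inj by (rule inj_on_subset) auto
  ultimately show ?thesis by (simp add: card_image)
qed

theorem mainTheorem19:
  shows "(\<forall>n. \<forall>\<pi>\<in>Sn n.
            (\<not> contains_3_214 n \<pi> \<longleftrightarrow> avoids_120 n (Theta n \<pi>)) \<and>
            (\<not> contains_2_413 n \<pi> \<longleftrightarrow> avoids_021 n (Theta n \<pi>))) \<and>
         (\<forall>n. card {e\<in>In n. avoids_120 n e} = card {\<pi>\<in>Sn n. \<not> contains_3_214 n \<pi>} \<and>
              card {e\<in>In n. avoids_021 n e} = card {\<pi>\<in>Sn n. \<not> contains_2_413 n \<pi>})"
proof (intro conjI allI ballI)
  fix n \<pi> assume p: "\<pi> \<in> Sn n"
  show "(\<not> contains_3_214 n \<pi>) = avoids_120 n (Theta n \<pi>)" using part_a[OF p] .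
  show "(\<not> contains_2_413 n \<pi>) = avoids_021 n (Theta n \<pi>)" using part_b[OF p] .
next
  fix n
  show "card {e\<in>In n. avoids_120 n e} = card {\<pi>\<in>Sn n. \<not> contains_3_214 n \<pi>}"
    by (rule card_transfer) (rule part_a)
  show "card {e\<in>In n. avoids_021 n e} = card {\<pi>\<in>Sn n. \<not> contains_2_413 n \<pi>}"
    by (rule card_transfer) (rule part_b)
qed

end
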